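(* Suppose there exists a $\pi_p$-bounded element $\xi\in G$. Then $H^0_{\mathrm{ct}}(G,\pi_p)=L^p(G,V)^G=\{0\}$.
   Context: $G$ is a locally compact second countable group with left Haar measure; $(\pi_0,V)$ is a continuous representation of $G$ on a separable Banach space $V$; for $p>1$, $\pi_p$ is the representation on the Bochner space $L^p(G,V)$ given by $(\pi(g)f)(h)=\pi_0(g)(f(hg))$, and $L^p(G,V)^G$ its space of $G$-invariant vectors. An element $\xi$ is $\pi_p$-bounded if $\{\xi^n:n>0\}$ is not relatively compact and $\sup_{n>0}|||\pi(\xi^n)|||_{L^p(G,V)}<\infty$. *)

theory Defs
  imports "HOL-Analysis.Analysis"
begin

text \<open>The group G is written additively (class topological_group_add; group_add is NOT
  assumed commutative). Hence g h in the paper is g + h, and xi^n is gpow xi n.\<close>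

definition gpow :: "'g::group_add \<Rightarrow> nat \<Rightarrow> 'g" where
  "gpow \<xi> n = (((+) \<xi>) ^^ n) 0"

definition left_haar_measure :: "'g::{topological_group_add} measure \<Rightarrow> bool" where
  "left_haar_measure M \<longleftrightarrow>
     sets M = sets borel \<and> space M = UNIV \<and>
     (\<forall>g A. A \<in> sets borel \<longrightarrow> emeasure M ((+) g ` A) = emeasure M A) \<and>
     (\<forall>K. compact K \<longrightarrow> emeasure M K < \<infinity>) \<and>
     (\<forall>U. open U \<and> U \<noteq> {} \<longrightarrow> emeasure M U > 0)"

definition continuous_rep :: "('g::{topological_group_add} \<Rightarrow> 'v::banach \<Rightarrow> 'v) \<Rightarrow> bool" where
  "continuous_rep \<pi>0 \<longleftrightarrow>
     (\<forall>g. bounded_linear (\<pi>0 g)) \<and>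
     \<pi>0 0 = id \<and>
     (\<forall>g h. \<pi>0 (g + h) = \<pi>0 g \<circ> \<pi>0 h) \<and>
     (\<forall>v. continuous_on UNIV (\<lambda>g. \<pi>0 g v))"

text \<open>Representatives of elements of the Bochner space L^p(G,V).\<close>
definition Lp_space :: "'g measure \<Rightarrow> real \<Rightarrow> ('g \<Rightarrow> 'v::banach) set" where
  "Lp_space M p = {f. f \<in> borel_measurable M \<and> integrable M (\<lambda>h. norm (f h) powr p)}"

definition Lp_norm_pow :: "'g measure \<Rightarrow> real \<Rightarrow> ('g \<Rightarrow> 'v::real_normed_vector) \<Rightarrow> ennreal" where
  "Lp_norm_pow M p f = (\<integral>\<^sup>+ h. ennreal (norm (f h) powr p) \<partial>M)"

definition pi_p :: "('g::group_add \<Rightarrow> 'v \<Rightarrow> 'v) \<Rightarrow> 'g \<Rightarrow> ('g \<Rightarrow> 'v) \<Rightarrow> ('g \<Rightarrow> 'v)" where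
  "pi_p \<pi>0 g f = (\<lambda>h. \<pi>0 g (f (h + g)))"

definition Lp_opnorm_pow :: "'g::group_add measure \<Rightarrow> real \<Rightarrow> ('g \<Rightarrow> 'v::banach \<Rightarrow> 'v) \<Rightarrow> 'g \<Rightarrow> ennreal" where
  "Lp_opnorm_pow M p \<pi>0 g =
     (SUP f \<in> {f \<in> Lp_space M p. Lp_norm_pow M p f \<le> 1}. Lp_norm_pow M p (pi_p \<pi>0 g f))"

definition pi_p_bounded :: "'g::topological_group_add measure \<Rightarrow> real \<Rightarrow> ('g \<Rightarrow> 'v::banach \<Rightarrow> 'v) \<Rightarrow> 'g \<Rightarrow> bool" where
  "pi_p_bounded M p \<pi>0 \<xi> \<longleftrightarrow>
     \<not> compact (closure {gpow \<xi> n | n. n > 0}) \<and>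
     (SUP n \<in> {0<..}. Lp_opnorm_pow M p \<pi>0 (gpow \<xi> n)) < \<infinity>"

text \<open>G-invariant vectors of L^p(G,V) (= H^0_ct(G, pi_p)); equality in L^p is a.e. equality.\<close>
definition Lp_invariants :: "'g::group_add measure \<Rightarrow> real \<Rightarrow> ('g \<Rightarrow> 'v::banach \<Rightarrow> 'v) \<Rightarrow> ('g \<Rightarrow> 'v) set" where
  "Lp_invariants M p \<pi>0 =
     {f \<in> Lp_space M p. \<forall>g. AE h in M. pi_p \<pi>0 g f h = f h}"

end

theory Submission
  imports Defs
begin

lemma Lp_norm_pow_ind:
  fixes f :: "'a \<Rightarrow> 'v::banach"
  assumes f: "f \<in> Lp_space M p" and p: "p > 0" and S: "S \<in> sets M"
  shows "Lp_norm_pow M p (\<lambda>x. c *\<^sub>R (indicator S x *\<^sub>R f x))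
       = ennreal (\<bar>c\<bar> powr p * (LINT x|M. indicator S x * norm (f x) powr p))"
proof -
  have pt: "norm (c *\<^sub>R (indicator S x *\<^sub>R f x)) powr p = \<bar>c\<bar> powr p * (indicator S x * norm (f x) powr p)" for x
    using p by (cases "x \<in> S") (auto simp: powr_mult)
  have int: "integrable M (\<lambda>x. indicator S x * norm (f x) powr p)"
    using integrable_mult_indicator[OF S, of "\<lambda>x. norm (f x) powr p"] f by (simp add: Lp_space_def)
  have "Lp_norm_pow M p (\<lambda>x. c *\<^sub>R (indicator S x *\<^sub>R f x))
      = (\<integral>\<^sup>+ x. ennreal (\<bar>c\<bar> powr p * (indicator S x * norm (f x) powr p)) \<partial>M)"
    unfolding Lp_norm_pow_def pt ..
  also have "\<dots> = ennreal (LINT x|M. \<bar>c\<bar> powr p * (indicator S x * norm (f x) powr p))"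
    by (rule nn_integral_eq_integral) (use int in auto)
  also have "\<dots> = ennreal (\<bar>c\<bar> powr p * (LINT x|M. indicator S x * norm (f x) powr p))"
    by simp
  finally show ?thesis .
qed

lemma Lp_space_ind:
  fixes f :: "'a \<Rightarrow> 'v::{banach,second_countable_topology}"
  assumes f: "f \<in> Lp_space M p" and p: "p > 0" and S: "S \<in> sets M"
  shows "(\<lambda>x. c *\<^sub>R (indicator S x *\<^sub>R f x)) \<in> Lp_space M p"
proof -
  have pt: "norm (c *\<^sub>R (indicator S x *\<^sub>R f x)) powr p = \<bar>c\<bar> powr p * (indicator S x * norm (f x) powr p)" for x
    using p by (cases "x \<in> S") (auto simp: powr_mult)
  have int: "integrable M (\<lambda>x. indicator S x * norm (f x) powr p)"
    using integrable_mult_indicator[OF S, of "\<lambda>x. norm (f x) powr p"] f by (simp add: Lp_space_def)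
  have i2: "integrable M (\<lambda>x. norm (c *\<^sub>R (indicator S x *\<^sub>R f x)) powr p)"
    unfolding pt by (rule integrable_mult_right[OF int])
  have m: "(\<lambda>x. c *\<^sub>R (indicator S x *\<^sub>R f x)) \<in> borel_measurable M"
    using f S by (auto simp: Lp_space_def)
  show ?thesis unfolding Lp_space_def using i2 m by blast
qed

lemma real_scaling:
  fixes a b s :: real
  assumes "a \<ge> 0" "b \<ge> 0" "s \<ge> 0" and H: "\<And>t. t > 0 \<Longrightarrow> t * b \<le> 1 \<Longrightarrow> t * a \<le> s"
  shows "a \<le> s * b"
proof (rule ccontr)
  assume c: "\<not> a \<le> s * b"
  show False
  proof (cases "b = 0")
    case True
    then have "a > 0" using c assms by auto
    have "(s+1)/a * a \<le> s" using H[of "(s+1)/a"] True \<open>a>0\<close> assms by auto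
    then show False using \<open>a>0\<close> by simp
  next
    case False
    then have "b > 0" using assms by auto
    have "(1/b) * a \<le> s" using H[of "1/b"] \<open>b>0\<close> by auto
    then have "a \<le> s * b" using \<open>b>0\<close> by (simp add: field_simps)
    then show False using c by simp
  qed
qed

lemma core:
  fixes f :: "'g::group_add \<Rightarrow> 'v::{banach,second_countable_topology}"
  assumes f: "f \<in> Lp_space M p" and p: "p > 0"
    and A: "A \<in> sets M" and B: "(\<lambda>a. a + g) ` A \<in> sets M"
    and lin: "linear (\<pi>0 g)"
    and inv: "AE h in M. \<pi>0 g (f (h + g)) = f h"
    and bnd: "\<And>u. u \<in> Lp_space M p \<Longrightarrow> Lp_norm_pow M p u \<le> 1 \<Longrightarrow> Lp_norm_pow M p (pi_p \<pi>0 g u) \<le> ennreal s"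
    and s: "s \<ge> 0"
  shows "(LINT x|M. indicator A x * norm (f x) powr p)
          \<le> s * (LINT x|M. indicator ((\<lambda>a. a + g) ` A) x * norm (f x) powr p)"
proof (rule real_scaling)
  define B where "B = (\<lambda>a. a + g) ` A"
  show "0 \<le> (LINT x|M. indicator A x * norm (f x) powr p)"
    by (intro integral_nonneg_AE) auto
  show "0 \<le> (LINT x|M. indicator ((\<lambda>a. a + g) ` A) x * norm (f x) powr p)"
    by (intro integral_nonneg_AE) auto
  show "0 \<le> s" by fact
  fix t :: real assume t: "t > 0"
    and tb: "t * (LINT x|M. indicator ((\<lambda>a. a + g) ` A) x * norm (f x) powr p) \<le> 1"
  define c where "c = t powr (1/p)"
  have cp: "\<bar>c\<bar> powr p = t" using t p unfolding c_def by (simp add: powr_powr)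
  define u where "u = (\<lambda>x. c *\<^sub>R (indicator B x *\<^sub>R f x))"
  have uL: "u \<in> Lp_space M p" unfolding u_def B_def by (rule Lp_space_ind[OF f p B])
  have un: "Lp_norm_pow M p u \<le> 1"
    unfolding u_def B_def Lp_norm_pow_ind[OF f p B] cp using tb by simp
  have ind: "indicator B (h + g) = (indicator A h :: real)" for h
  proof -
    have "(h + g \<in> B) = (h \<in> A)" unfolding B_def by auto
    then show ?thesis by (simp add: indicator_def)
  qed
  have "AE h in M. pi_p \<pi>0 g u h = c *\<^sub>R (indicator A h *\<^sub>R f h)"
    using inv
  proof eventually_elim
    case (elim h)
    have "pi_p \<pi>0 g u h = c *\<^sub>R (indicator B (h + g) *\<^sub>R \<pi>0 g (f (h + g)))"
      unfolding pi_p_def u_def using lin by (simp add: linear_scale)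
    then show ?case using elim ind by simp
  qed
  then have "Lp_norm_pow M p (pi_p \<pi>0 g u) = Lp_norm_pow M p (\<lambda>h. c *\<^sub>R (indicator A h *\<^sub>R f h))"
    unfolding Lp_norm_pow_def by (intro nn_integral_cong_AE) auto
  also have "\<dots> = ennreal (t * (LINT x|M. indicator A x * norm (f x) powr p))"
    unfolding Lp_norm_pow_ind[OF f p A] cp ..
  finally have "ennreal (t * (LINT x|M. indicator A x * norm (f x) powr p)) \<le> ennreal s"
    using bnd[OF uL un] by simp
  then show "t * (LINT x|M. indicator A x * norm (f x) powr p) \<le> s"
    using s by (simp add: ennreal_le_iff)
qed

lemma sigma_compact_exhaust:
  assumes "locally_compact_space (euclidean :: 'a topology)"
  obtains K :: "nat \<Rightarrow> 'a::second_countable_topology set" where "\<And>n. compact (K n)" "incseq K" "(\<Union>n. K n) = UNIV"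
proof -
  define F where "F = {U::'a set. open U \<and> (\<exists>C. compact C \<and> U \<subseteq> C)}"
  have cov: "\<Union>F = UNIV"
  proof -
    { fix x :: 'a
      obtain U C where "openin euclidean U" "compactin euclidean C" "x \<in> U" "U \<subseteq> C"
        using assms unfolding locally_compact_space_def by (metis UNIV_I compactin_euclidean_iff open_openin topspace_euclidean)
      then have "x \<in> \<Union>F" unfolding F_def by auto }
    then show ?thesis by auto
  qed
  obtain F' where F': "F' \<subseteq> F" "countable F'" "\<Union>F' = \<Union>F"
    using Lindelof[of F] unfolding F_def by auto
  have ne: "F' \<noteq> {}" using F' cov by auto
  define e where "e = from_nat_into F'"
  have rng: "range e = F'" using F' ne unfolding e_def by (simp add: range_from_nat_into)
  have "\<forall>i. \<exists>C. compact C \<and> e i \<subseteq> C" using rng F' unfolding F_def by blast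
  then obtain C where C: "\<And>i. compact (C i)" "\<And>i. e i \<subseteq> C i" by metis
  define K where "K n = (\<Union>i\<le>n. C i)" for n
  show ?thesis
  proof
    show "compact (K n)" for n unfolding K_def using C by (intro compact_UN) auto
    show "incseq K" unfolding K_def incseq_def by (auto intro: order_trans)
    have "UNIV = \<Union>(range e)" using rng F' cov by auto
    also have "\<dots> \<subseteq> (\<Union>n. K n)" unfolding K_def using C by fastforce
    finally show "(\<Union>n. K n) = UNIV" by auto
  qed
qed

lemma fin_ennreal: "x < (\<infinity>::ennreal) \<Longrightarrow> \<exists>s\<ge>0. x = ennreal s"
proof -
  assume "x < \<infinity>"
  then have "x < top" unfolding infinity_ennreal_def .
  then have "ennreal (enn2real x) = x" by (rule ennreal_enn2real)
  then show ?thesis by (intro exI[of _ "enn2real x"]) auto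
qed

theorem corollary2:
  fixes M :: "'g::{topological_group_add, t2_space, second_countable_topology} measure"
    and \<pi>0 :: "'g \<Rightarrow> 'v::{banach, second_countable_topology} \<Rightarrow> 'v"
    and p :: real and \<xi> :: 'g
  assumes "locally_compact_space (euclidean :: 'g topology)"
    and "left_haar_measure M"
    and "continuous_rep \<pi>0"
    and "p > 1"
    and "pi_p_bounded M p \<pi>0 \<xi>"
  shows "\<forall>f \<in> Lp_invariants M p \<pi>0. AE h in M. f h = 0"
proof
  fix f assume fI: "f \<in> Lp_invariants M p \<pi>0"
  have fL: "f \<in> Lp_space M p" using fI by (simp add: Lp_invariants_def)
  have finv: "\<And>g. AE h in M. \<pi>0 g (f (h + g)) = f h"
    using fI by (simp add: Lp_invariants_def pi_p_def)
  have p0: "p > 0" using assms(4) by simp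
  have sM: "sets M = sets borel" and spM: "space M = UNIV"
    using assms(2) by (auto simp: left_haar_measure_def)
  have lin: "\<And>g. linear (\<pi>0 g)" using assms(3)
    by (simp add: continuous_rep_def bounded_linear.linear)
  define w where "w x = norm (f x) powr p" for x
  have wint: "integrable M w" using fL unfolding Lp_space_def w_def[abs_def] by blast
  define J where "J S = (LINT x|M. indicator S x * w x)" for S
  have Jnn: "J S \<ge> 0" for S unfolding J_def w_def by (intro integral_nonneg_AE) auto
  have compM: "compact S \<Longrightarrow> S \<in> sets M" for S using sM borel_compact by auto
  define X where "X = {gpow \<xi> n | n. n > 0}"
  have ncX: "\<not> compact (closure X)" and bdd: "(SUP n \<in> {0<..}. Lp_opnorm_pow M p \<pi>0 (gpow \<xi> n)) < \<infinity>"
    using assms(5) unfolding pi_p_bounded_def X_def by auto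
  obtain s where sE: "(SUP n \<in> {0<..}. Lp_opnorm_pow M p \<pi>0 (gpow \<xi> n)) = ennreal s"
      and s0: "s \<ge> 0"
    using fin_ennreal[OF bdd] by blast
  have bnd: "Lp_norm_pow M p (pi_p \<pi>0 (gpow \<xi> n) u) \<le> ennreal s"
    if "n > 0" "u \<in> Lp_space M p" "Lp_norm_pow M p u \<le> 1" for n u
  proof -
    have "Lp_norm_pow M p (pi_p \<pi>0 (gpow \<xi> n) u) \<le> Lp_opnorm_pow M p \<pi>0 (gpow \<xi> n)"
      unfolding Lp_opnorm_pow_def using that by (intro SUP_upper) auto
    also have "\<dots> \<le> (SUP n \<in> {0<..}. Lp_opnorm_pow M p \<pi>0 (gpow \<xi> n))"
      using that by (intro SUP_upper) auto
    finally show ?thesis by (simp only: sE)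
  qed
  obtain K :: "nat \<Rightarrow> 'g set" where K: "\<And>n. compact (K n)" "incseq K" "(\<Union>n. K n) = UNIV"
    using sigma_compact_exhaust[OF assms(1)] by blast
  have lim: "(\<lambda>j. J (K j)) \<longlonglongrightarrow> J UNIV"
  proof -
    have "(\<lambda>j. LINT x|M. indicator (K j) x * w x) \<longlonglongrightarrow> (LINT x|M. w x)"
    proof (rule integral_dominated_convergence[where w="\<lambda>x. norm (w x)"])
      show "w \<in> borel_measurable M" using wint by auto
      show "(\<lambda>x. indicator (K j) x * w x) \<in> borel_measurable M" for j
        using wint compM[OF K(1)] by auto
      show "integrable M (\<lambda>x. norm (w x))" using wint by auto
      show "AE x in M. (\<lambda>j. indicator (K j) x * w x) \<longlonglongrightarrow> w x"
      proof (rule AE_I2)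
        fix x
        obtain j0 where "x \<in> K j0" using K(3) by auto
        then have "\<forall>j\<ge>j0. x \<in> K j" using K(2) by (auto simp: incseq_def)
        then have "eventually (\<lambda>j. indicator (K j) x * w x = w x) sequentially"
          unfolding eventually_sequentially by (intro exI[of _ j0]) (auto simp: indicator_def)
        then show "(\<lambda>j. indicator (K j) x * w x) \<longlonglongrightarrow> w x"
          by (rule tendsto_eventually)
      qed
      show "AE x in M. norm (indicator (K j) x * w x) \<le> norm (w x)" for j
        by (auto simp: indicator_def)
    qed
    then show ?thesis unfolding J_def by simp
  qed
  have zero: "J (K m) = 0" for m
  proof -
    have le: "J (K m) \<le> s * (J UNIV - J (K j))" for j
    proof -
      define T where "T = (\<lambda>x. - fst x + snd x) ` (K m \<times> K j)"
      have cT: "compact T" unfolding T_def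
        by (intro compact_continuous_image compact_Times K(1) continuous_intros)
      have "\<not> X \<subseteq> T"
      proof
        assume "X \<subseteq> T"
        then have "closure X \<subseteq> T" using cT by (intro closure_minimal compact_imp_closed)
        then have "closure X = closure X \<inter> T" by auto
        then have "compact (closure X)" using closed_Int_compact[OF closed_closure[of X] cT] by simp
        then show False using ncX by simp
      qed
      then obtain n where n: "n > 0" "gpow \<xi> n \<notin> T" unfolding X_def by auto
      define g where "g = gpow \<xi> n"
      have disj0: "\<forall>a\<in>K m. a + g \<notin> K j"
      proof (intro ballI notI)
        fix a assume a: "a \<in> K m" "a + g \<in> K j"
        have "- a + (a + g) \<in> T" unfolding T_def using a by force
        then show False using n unfolding g_def by (simp add: add.assoc[symmetric])
      qed
      have disj: "(\<lambda>a. a + g) ` K m \<subseteq> UNIV - K j" using disj0 by auto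
      have Bc: "compact ((\<lambda>a. a + g) ` K m)"
        by (intro compact_continuous_image K(1) continuous_intros)
      have cK: "UNIV - K j \<in> sets M"
        using sets.compl_sets[OF compM[OF K(1)[of j]]] spM by simp
      have bndg: "\<And>u. u \<in> Lp_space M p \<Longrightarrow> Lp_norm_pow M p u \<le> 1 \<Longrightarrow> Lp_norm_pow M p (pi_p \<pi>0 g u) \<le> ennreal s"
        using bnd[OF n(1)] unfolding g_def by blast
      have "J (K m) \<le> s * J ((\<lambda>a. a + g) ` K m)"
        unfolding J_def w_def
        by (rule core[OF fL p0 compM[OF K(1)[of m]] compM[OF Bc] lin[of g] finv[of g] bndg s0])
      also have "J ((\<lambda>a. a + g) ` K m) \<le> J (UNIV - K j)"
        unfolding J_def
        apply (rule integral_mono)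
        using integrable_mult_indicator[OF compM[OF Bc] wint]
              integrable_mult_indicator[OF cK wint] wint disj
        by (auto simp: indicator_def w_def sets.compl_sets)
      also have "J (UNIV - K j) = J UNIV - J (K j)"
      proof -
        have "J (UNIV - K j) = (LINT x|M. w x - indicator (K j) x * w x)"
          unfolding J_def by (intro Bochner_Integration.integral_cong) (auto simp: indicator_def)
        also have "\<dots> = J UNIV - J (K j)"
          unfolding J_def using wint integrable_mult_indicator[OF compM[OF K(1)] wint]
          by (subst Bochner_Integration.integral_diff) auto
        finally show ?thesis .
      qed
      finally show ?thesis using s0 by (simp add: mult_left_mono)
    qed
    have "(\<lambda>j. s * (J UNIV - J (K j))) \<longlonglongrightarrow> s * (J UNIV - J UNIV)"
      by (intro tendsto_intros lim)
    then have "J (K m) \<le> 0"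
      using le by (intro LIMSEQ_le_const) auto
    then show ?thesis using Jnn[of "K m"] by simp
  qed
  have "J UNIV = 0"
    using LIMSEQ_unique[OF lim] zero by simp
  then have "integral\<^sup>L M w = 0" unfolding J_def by simp
  then have "AE x in M. w x = 0"
    using integral_nonneg_eq_0_iff_AE[OF wint] by (simp add: w_def)
  then show "AE h in M. f h = 0"
    by eventually_elim (use p0 in \<open>simp add: w_def\<close>)
qed

end
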